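(* Let $G=(V,v,E)$ be a directed graph with node set $V=\{1,\dots,n\}$, target node $v$ and edge set $E$, and let $Z$ be a set of ordered node pairs with $Z\cap E=\emptyset$. For $\mathbf{y}\in\{0,1\}^{Z}$ with support $Y$, let $\mathcal{FR}(\mathbf{y})\ge0$ be the expected first return time to $v$ of the PageRank random walk on $(V,E\cup Y)$. Let $\mathcal{Y}$ be a constraint set with $\mathcal{Y}\cap\{0,1\}^{Z}\ne\emptyset$, and for disjoint $S,N\subseteq Z$ let $\gamma(S,N)=\min\{\mathcal{FR}(\mathbf{y}): y_e=1\ \forall e\in S,\ y_e=0\ \forall e\in N,\ \mathbf{y}\in\{0,1\}^{Z}\}$. Let $\bar{\mathbf{y}}\in\mathcal{Y}\cap\{0,1\}^{Z}$ with support $\bar Y$, and let $e^1,e^2,\dots,e^{K}$ ($K=|Z\setminus\bar Y|$) be an arbitrary ordering of the edges of $Z\setminus\bar Y$. For $r=1,\dots,K$ define $$\hat\pi_{e^r}(\bar{\mathbf{y}})=\min\Big\{0,\,-\mathcal{FR}(\bar{\mathbf{y}})+\min\{\mathcal{FR}(\mathbf{y}): y_{e^r}=1,\ y_{e^k}=0\ (k=r+1,\dots,K),\ \mathbf{y}\in\{0,1\}^{Z}\}\Big\}=\min\Big\{0,\,-\mathcal{FR}(\bar{\mathbf{y}})+\gamma\big(\{e^r\},\{e^{r+1},\dots,e^{K}\}\big)\Big\}.$$ Then the inequality $$\theta\ \ge\ \mathcal{FR}(\bar{\mathbf{y}})+\sum_{e\in\bar Y}\min\{0,\gamma(\emptyset,\{e\})-\mathcal{FR}(\bar{\mathbf{y}})\}(1-y_e)+\sum_{k=1}^{K}\hat\pi_{e^k}(\bar{\mathbf{y}})\,y_{e^k}$$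 is valid, i.e. it is satisfied by every pair $(\theta,\mathbf{y})$ with $\mathbf{y}\in\mathcal{Y}\cap\{0,1\}^{Z}$, $\theta\in\mathbb{R}_+$ and $\theta\ge\mathcal{FR}(\mathbf{y})$.
   Context: The PageRank random walk is the random walk defined by the PageRank (Google) matrix with fixed damping and teleportation, as in Csáji–Jungers–Blondel; the expected first return time to $v$ is the expected number of steps for the walk started at $v$ to return to $v$ (the reciprocal of $v$'s PageRank). The underlying problem is $\min\{\mathcal{FR}(\mathbf{y}):\mathbf{y}\in\mathcal{Y}\cap\{0,1\}^{Z}\}$ in epigraph form with variable $\theta$. *)

theory Defs
  imports Complex_Main
begin

type_synonym edge = "nat \<times> nat"

definition binvecs :: "edge set \<Rightarrow> (edge \<Rightarrow> real) set" where
  "binvecs Z = {y. (\<forall>e\<in>Z. y e = 0 \<or> y e = 1) \<and> (\<forall>e. e \<notin> Z \<longrightarrow> y e = 0)}"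

definition supp :: "edge set \<Rightarrow> (edge \<Rightarrow> real) \<Rightarrow> edge set" where
  "supp Z y = {e\<in>Z. y e = 1}"

text \<open>PageRank (Google) matrix on nodes {1..n} with edge set A, damping c and
 teleportation distribution z; dangling nodes jump according to z.\<close>
definition pr_matrix :: "nat \<Rightarrow> real \<Rightarrow> (nat \<Rightarrow> real) \<Rightarrow> edge set \<Rightarrow> nat \<Rightarrow> nat \<Rightarrow> real" where
  "pr_matrix n c z A i j =
     (let d = card {k\<in>{1..n}. (i,k) \<in> A} in
      if d = 0 then z j
      else c * (if (i,j) \<in> A then 1 / real d else 0) + (1 - c) * z j)"

text \<open>hit_prob n P v k u: probability that the walk started at u visits v for the
 first time (at a positive time) exactly at step k.\<close>
fun hit_prob :: "nat \<Rightarrow> (nat \<Rightarrow> nat \<Rightarrow> real) \<Rightarrow> nat \<Rightarrow> nat \<Rightarrow> nat \<Rightarrow> real" where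
  "hit_prob n P v 0 u = 0"
| "hit_prob n P v (Suc 0) u = P u v"
| "hit_prob n P v (Suc (Suc m)) u = (\<Sum>w\<in>{1..n} - {v}. P u w * hit_prob n P v (Suc m) w)"

definition expected_return :: "nat \<Rightarrow> (nat \<Rightarrow> nat \<Rightarrow> real) \<Rightarrow> nat \<Rightarrow> real" where
  "expected_return n P v = (\<Sum>k. real k * hit_prob n P v k v)"

definition FR :: "nat \<Rightarrow> real \<Rightarrow> (nat \<Rightarrow> real) \<Rightarrow> edge set \<Rightarrow> nat \<Rightarrow> edge set
                  \<Rightarrow> (edge \<Rightarrow> real) \<Rightarrow> real" where
  "FR n c z E v Z y = expected_return n (pr_matrix n c z (E \<union> supp Z y)) v"

definition gamma :: "nat \<Rightarrow> real \<Rightarrow> (nat \<Rightarrow> real) \<Rightarrow> edge set \<Rightarrow> nat \<Rightarrow> edge set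
                  \<Rightarrow> edge set \<Rightarrow> edge set \<Rightarrow> real" where
  "gamma n c z E v Z S N =
     Min (FR n c z E v Z ` {y \<in> binvecs Z. (\<forall>e\<in>S. y e = 1) \<and> (\<forall>e\<in>N. y e = 0)})"

end

theory Submission
  imports Defs
begin

lemma binvecs_finite:
  assumes "finite Z" shows "finite (binvecs Z)"
proof (rule inj_on_finite[where f="\<lambda>y. {e\<in>Z. y e = 1}" and B="Pow Z"])
  show "inj_on (\<lambda>y. {e\<in>Z. y e = 1}) (binvecs Z)"
  proof (rule inj_onI)
    fix x y assume x: "x \<in> binvecs Z" and y: "y \<in> binvecs Z" and eq: "{e\<in>Z. x e = 1} = {e\<in>Z. y e = 1}"
    show "x = y"
    proof
      fix e show "x e = y e"
      proof (cases "e \<in> Z")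
        case True
        then have "x e = 1 \<longleftrightarrow> y e = 1" using eq by blast
        then show ?thesis using x y True unfolding binvecs_def by force
      next
        case False then show ?thesis using x y unfolding binvecs_def by (simp del: split_paired_All)
      qed
    qed
  qed
qed (use assms in auto)

lemma gamma_le:
  assumes "finite Z" "y \<in> binvecs Z" "\<forall>e\<in>S. y e = 1" "\<forall>e\<in>N. y e = 0"
  shows "gamma n c z E v Z S N \<le> FR n c z E v Z y"
  unfolding gamma_def
  by (rule Min_le) (use assms binvecs_finite in auto)

lemma sum_le_one:
  fixes f :: "'a \<Rightarrow> real"
  assumes "finite A" "a \<in> A" "\<forall>x\<in>A. f x \<le> 0"
  shows "sum f A \<le> f a"
proof -
  have "sum f A = f a + sum f (A - {a})" using assms by (simp add: sum.remove)
  moreover have "sum f (A - {a}) \<le> 0" using assms by (intro sum_nonpos) auto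
  ultimately show ?thesis by simp
qed

theorem theorem2:
  fixes n v :: nat and E Z :: "edge set" and c :: real and z :: "nat \<Rightarrow> real"
    and Ycon :: "(edge \<Rightarrow> real) set" and ybar y :: "edge \<Rightarrow> real"
    and es :: "edge list" and \<theta> :: real
  assumes "v \<in> {1..n}"
    and "E \<subseteq> {1..n} \<times> {1..n}" and "Z \<subseteq> {1..n} \<times> {1..n}" and "Z \<inter> E = {}"
    and "0 < c" and "c < 1" and "\<forall>j\<in>{1..n}. z j > 0" and "(\<Sum>j\<in>{1..n}. z j) = 1"
    and "Ycon \<inter> binvecs Z \<noteq> {}"
    and "ybar \<in> Ycon \<inter> binvecs Z"
    and "distinct es" and "set es = Z - supp Z ybar"
    and "y \<in> Ycon \<inter> binvecs Z" and "\<theta> \<ge> 0" and "\<theta> \<ge> FR n c z E v Z y"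
  shows "\<theta> \<ge> FR n c z E v Z ybar
     + (\<Sum>e\<in>supp Z ybar. min 0 (gamma n c z E v Z {} {e} - FR n c z E v Z ybar) * (1 - y e))
     + (\<Sum>r<length es.
          min 0 (- FR n c z E v Z ybar + gamma n c z E v Z {es ! r} (set (drop (Suc r) es)))
          * y (es ! r))"
proof -
  define F where "F = FR n c z E v Z ybar"
  define g1 where "g1 = (\<lambda>e. min 0 (gamma n c z E v Z {} {e} - F) * (1 - y e))"
  define g2 where "g2 = (\<lambda>r. min 0 (- F + gamma n c z E v Z {es ! r} (set (drop (Suc r) es))) * y (es ! r))"
  have finZ: "finite Z" using assms(3) by (rule finite_subset) auto
  have yb: "y \<in> binvecs Z" and ybb: "ybar \<in> binvecs Z" using assms by auto
  have y01: "\<And>e. e \<in> Z \<Longrightarrow> y e = 0 \<or> y e = 1" using yb unfolding binvecs_def by auto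
  have suppZ: "supp Z ybar \<subseteq> Z" unfolding supp_def by auto
  have esZ: "\<And>r. r < length es \<Longrightarrow> es ! r \<in> Z" using assms(12) nth_mem by fastforce
  have finS: "finite (supp Z ybar)" using suppZ finZ finite_subset by auto
  have g1np: "\<forall>e\<in>supp Z ybar. g1 e \<le> 0"
  proof
    fix e assume "e \<in> supp Z ybar"
    then have "y e = 0 \<or> y e = 1" using y01 suppZ by blast
    then show "g1 e \<le> 0" unfolding g1_def by auto
  qed
  have g2np: "\<forall>r\<in>{..<length es}. g2 r \<le> 0"
  proof
    fix r assume "r \<in> {..<length es}"
    then have "y (es!r) = 0 \<or> y (es!r) = 1" using y01 esZ by auto
    then show "g2 r \<le> 0" unfolding g2_def by auto
  qed
  have S1: "sum g1 (supp Z ybar) \<le> 0" using g1np by (intro sum_nonpos) auto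
  have S2: "sum g2 {..<length es} \<le> 0" using g2np by (intro sum_nonpos) auto
  have "F + sum g1 (supp Z ybar) + sum g2 {..<length es} \<le> \<theta>"
  proof (cases "\<exists>r<length es. y (es!r) = 1")
    case True
    define R where "R = {r. r < length es \<and> y (es!r) = 1}"
    define m where "m = Max R"
    have finR: "finite R" "R \<noteq> {}" using True unfolding R_def by auto
    have mR: "m \<in> R" using finR Max_in m_def by auto
    have later: "\<forall>e\<in>set (drop (Suc m) es). y e = 0"
    proof
      fix e assume "e \<in> set (drop (Suc m) es)"
      then obtain k where k: "k < length (drop (Suc m) es)" "e = drop (Suc m) es ! k"
        by (metis in_set_conv_nth)
      then have ek: "e = es ! (Suc m + k)" "Suc m + k < length es" by auto
      have "Suc m + k \<notin> R" using Max_ge[OF finR(1)] m_def by fastforce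
      then have "y e \<noteq> 1" using ek R_def by auto
      then show "y e = 0" using y01 esZ ek by blast
    qed
    have "gamma n c z E v Z {es ! m} (set (drop (Suc m) es)) \<le> FR n c z E v Z y"
      using mR later by (intro gamma_le[OF finZ yb]) (auto simp: R_def)
    then have "g2 m \<le> \<theta> - F" using mR assms(15) unfolding g2_def R_def F_def by auto
    moreover have "sum g2 {..<length es} \<le> g2 m"
      using mR g2np by (intro sum_le_one) (auto simp: R_def)
    ultimately show ?thesis using S1 by linarith
  next
    case False
    then have y0: "\<And>r. r < length es \<Longrightarrow> y (es!r) = 0" using y01 esZ by blast
    have S20: "sum g2 {..<length es} = 0" unfolding g2_def using y0 by simp
    show ?thesis
    proof (cases "\<exists>e\<in>supp Z ybar. y e = 0")
      case True
      then obtain e where e: "e \<in> supp Z ybar" "y e = 0" by blast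
      have "gamma n c z E v Z {} {e} \<le> FR n c z E v Z y"
        using e by (intro gamma_le[OF finZ yb]) auto
      then have "g1 e \<le> \<theta> - F" using e assms(15) unfolding g1_def F_def by auto
      moreover have "sum g1 (supp Z ybar) \<le> g1 e" using e g1np finS by (intro sum_le_one) auto
      ultimately show ?thesis using S20 by linarith
    next
      case False2: False
      have "y = ybar"
      proof
        fix e show "y e = ybar e"
        proof (cases "e \<in> Z")
          case True
          show ?thesis
          proof (cases "e \<in> supp Z ybar")
            case True
            then have "ybar e = 1" "e \<in> Z" unfolding supp_def by auto
            moreover have "y e \<noteq> 0" using False2 True by blast
            ultimately show ?thesis using y01 by metis
          next
            case False
            then have "e \<in> set es" using assms(12) \<open>e \<in> Z\<close> by auto
            then obtain r where "r < length es" "e = es ! r" by (metis in_set_conv_nth)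
            then have "y e = 0" using y0 by auto
            moreover have "ybar e = 0" using False \<open>e \<in> Z\<close> ybb unfolding supp_def binvecs_def by auto
            ultimately show ?thesis by simp
          qed
        next
          case False
          then show ?thesis using yb ybb unfolding binvecs_def by (simp del: split_paired_All)
        qed
      qed
      then have "F \<le> \<theta>" using assms(15) F_def by simp
      then show ?thesis using S1 S20 by linarith
    qed
  qed
  then show ?thesis unfolding F_def g1_def g2_def by simp
qed

end
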